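(* Let $k\ge1$, let $\mathcal{H}$ be a separable infinite-dimensional complex Hilbert space with orthonormal basis $\{e_n\}_{n\ge0}$, and let $\alpha_0,\dots,\alpha_k\in\mathbb{C}$ with $\sum_{i=0}^k|\alpha_i|^2<1$. Let $T$ be the operator on $\mathcal{H}$ given by $Te_0=\alpha_0e_0+\alpha_1e_1+\cdots+\alpha_ke_k$ and $Te_n=e_{n+k}$ for $n\ge1$ (so $T$ is a completely non-unitary contraction with $\dim\mathcal{D}_T=1$, $\mathcal{D}_T\subseteq\mathcal{D}_{T^*}$, $\dim\mathcal{D}_{T^*}<\infty$). Then $T$ is analytic if and only if either $\alpha_0=0$ or $\alpha_j\neq0$ for some $1\le j\le k$.
   Context: For a contraction $T$ on $\mathcal{H}$, $\mathcal{D}_T=\overline{(I-T^*T)^{1/2}\mathcal{H}}$ and $\mathcal{D}_{T^*}=\overline{(I-TT^* )^{1/2}\mathcal{H}}$. A contraction is completely non-unitary if it has no nonzero reducing subspace on which it is unitary. $T$ is analytic if $\bigcap_{m\ge1}T^m\mathcal{H}=\{0\}$. *)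

theory Defs
  imports "HOL-Analysis.Analysis"
begin

text \<open>Concrete model of a separable infinite-dimensional complex Hilbert space:
  the space l2(N) of square-summable complex sequences; the orthonormal basis
  e_n is the standard unit-vector basis, and a vector x corresponds to
  the sum over n of x n times e_n.\<close>

definition l2_seq :: "(nat \<Rightarrow> complex) set" where
  "l2_seq = {x. summable (\<lambda>n. (cmod (x n))\<^sup>2)}"

text \<open>The operator T with T e_0 = alpha_0 e_0 + ... + alpha_k e_k and T e_n = e_(n+k)
  for n >= 1, written in coordinates: the m-th coordinate of T x is
  alpha_m * x_0 for m <= k, and x_(m-k) for m > k.\<close>

definition T_op :: "nat \<Rightarrow> (nat \<Rightarrow> complex) \<Rightarrow> (nat \<Rightarrow> complex) \<Rightarrow> (nat \<Rightarrow> complex)" where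
  "T_op k \<alpha> x = (\<lambda>m. if m \<le> k then \<alpha> m * x 0 else x (m - k))"

definition analytic_op :: "(nat \<Rightarrow> complex) set \<Rightarrow> ((nat \<Rightarrow> complex) \<Rightarrow> (nat \<Rightarrow> complex)) \<Rightarrow> bool" where
  "analytic_op H T \<longleftrightarrow> (\<Inter>m\<in>{1..}. (T ^^ m) ` H) = {(\<lambda>_. 0)}"

end

theory Submission
  imports Defs
begin

lemma Tpow_Suc: "(T ^^ Suc j) x = T ((T ^^ j) x)"
  by simp

lemma T_apply: "T_op k \<alpha> y m = (if m \<le> k then \<alpha> m * y 0 else y (m - k))"
  by (simp add: T_op_def)

lemma pw_step: "((T_op k \<alpha> ^^ Suc j) x) n = (if n \<le> k then \<alpha> n * ((T_op k \<alpha> ^^ j) x) 0 else ((T_op k \<alpha> ^^ j) x) (n - k))"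
  by (subst funpow.simps(2), subst comp_apply, rule T_apply)

lemma T_zero_pow: "((T_op k \<alpha>) ^^ m) (\<lambda>_. 0) = (\<lambda>_. 0)"
  by (induction m) (auto simp: T_op_def)

lemma zero_l2: "(\<lambda>_. 0) \<in> l2_seq"
  by (simp add: l2_seq_def)

lemma case0:
  assumes "\<alpha> 0 = 0" "1 \<le> j" "n < j" "1 \<le> k"
  shows "((T_op k \<alpha> ^^ j) x) n = 0"
  using assms(2,3)
proof (induction j arbitrary: n)
  case 0 then show ?case by simp
next
  case (Suc j)
  show ?case
  proof (cases "j = 0")
    case True
    then have "n = 0" using Suc by simp
    then show ?thesis using True assms(1) by (simp add: pw_step del: funpow.simps)
  next
    case False
    show ?thesis
    proof (cases "n \<le> k")
      case True
      have "((T_op k \<alpha> ^^ j) x) 0 = 0" using Suc.IH False by simp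
      then show ?thesis using True by (simp add: pw_step del: funpow.simps)
    next
      case nk: False
      have "((T_op k \<alpha> ^^ j) x) (n - k) = 0" using Suc.IH False nk Suc.prems assms(4) by simp
      then show ?thesis using nk by (simp add: pw_step del: funpow.simps)
    qed
  qed
qed

lemma R_lemma:
  assumes "1 \<le> j" "1 \<le> n" "n \<le> k"
  shows "\<alpha> 0 * ((T_op k \<alpha> ^^ j) x) n = \<alpha> n * ((T_op k \<alpha> ^^ j) x) 0"
proof -
  obtain i where j: "j = Suc i" using assms(1) by (cases j) auto
  show ?thesis using assms unfolding j by (simp add: pw_step del: funpow.simps)
qed

lemma Q_lemma:
  assumes "k \<ge> 1"
  shows "k < n \<Longrightarrow> n \<le> j * k \<Longrightarrow> \<alpha> 0 * ((T_op k \<alpha> ^^ j) x) n = ((T_op k \<alpha> ^^ j) x) (n - k)"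
proof (induction j arbitrary: n)
  case 0 then show ?case by simp
next
  case (Suc j)
  have j1: "1 \<le> j" using Suc.prems by (cases j) auto
  have lhs: "((T_op k \<alpha> ^^ Suc j) x) n = ((T_op k \<alpha> ^^ j) x) (n - k)"
    using Suc.prems by (simp add: pw_step del: funpow.simps)
  show ?case
  proof (cases "n - k \<le> k")
    case True
    have "((T_op k \<alpha> ^^ Suc j) x) (n - k) = \<alpha> (n - k) * ((T_op k \<alpha> ^^ j) x) 0"
      using True by (simp add: pw_step del: funpow.simps)
    moreover have "\<alpha> 0 * ((T_op k \<alpha> ^^ j) x) (n - k) = \<alpha> (n - k) * ((T_op k \<alpha> ^^ j) x) 0"
      using R_lemma[OF j1, of "n - k" k \<alpha> x] True Suc.prems by simp
    ultimately show ?thesis using lhs by simp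
  next
    case False
    have "((T_op k \<alpha> ^^ Suc j) x) (n - k) = ((T_op k \<alpha> ^^ j) x) (n - k - k)"
      using False by (simp add: pw_step del: funpow.simps)
    moreover have "\<alpha> 0 * ((T_op k \<alpha> ^^ j) x) (n - k) = ((T_op k \<alpha> ^^ j) x) (n - k - k)"
      using Suc.IH[of "n - k"] False Suc.prems by (simp add: algebra_simps)
    ultimately show ?thesis using lhs by simp
  qed
qed

theorem corollary4p6:
  fixes k :: nat and \<alpha> :: "nat \<Rightarrow> complex"
  assumes "k \<ge> 1"
    and "(\<Sum>i\<le>k. (cmod (\<alpha> i))\<^sup>2) < 1"
  shows "analytic_op l2_seq (T_op k \<alpha>) \<longleftrightarrow> (\<alpha> 0 = 0 \<or> (\<exists>j\<in>{1..k}. \<alpha> j \<noteq> 0))"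
proof
  assume an: "analytic_op l2_seq (T_op k \<alpha>)"
  show "\<alpha> 0 = 0 \<or> (\<exists>j\<in>{1..k}. \<alpha> j \<noteq> 0)"
  proof (rule ccontr)
    assume "\<not> ?thesis"
    then have a0: "\<alpha> 0 \<noteq> 0" and aj: "\<And>j. 1 \<le> j \<Longrightarrow> j \<le> k \<Longrightarrow> \<alpha> j = 0" by auto
    have pw: "((T_op k \<alpha>) ^^ m) (\<lambda>n. if n = 0 then c else 0) = (\<lambda>n. if n = 0 then \<alpha> 0 ^ m * c else 0)" for m c
    proof (induction m)
      case 0 then show ?case by auto
    next
      case (Suc m)
      show ?case
      proof
        fix n
        show "((T_op k \<alpha>) ^^ Suc m) (\<lambda>n. if n = 0 then c else 0) n = (if n = 0 then \<alpha> 0 ^ Suc m * c else 0)"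
          using Suc.IH aj[of n] by (simp add: pw_step del: funpow.simps)
      qed
    qed
    have "(\<lambda>n. if n = 0 then (1::complex) else 0) \<in> (\<Inter>m\<in>{1..}. (T_op k \<alpha> ^^ m) ` l2_seq)"
    proof (intro INT_I)
      fix m :: nat
      have in1: "(\<lambda>n. if n = 0 then 1 / \<alpha> 0 ^ m else 0) \<in> l2_seq"
        unfolding l2_seq_def mem_Collect_eq by (rule summable_finite[of "{0}"]) auto
      have in2: "((T_op k \<alpha>) ^^ m) (\<lambda>n. if n = 0 then 1 / \<alpha> 0 ^ m else 0) = (\<lambda>n. if n = 0 then (1::complex) else 0)"
        using pw a0 by (simp add: fun_eq_iff)
      show "(\<lambda>n. if n = 0 then (1::complex) else 0) \<in> (T_op k \<alpha> ^^ m) ` l2_seq"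
        by (rule image_eqI[where f="T_op k \<alpha> ^^ m", OF in2[symmetric] in1])
    qed
    note mem = this
    have eq: "(\<Inter>m\<in>{1..}. (T_op k \<alpha> ^^ m) ` l2_seq) = {\<lambda>_. 0}"
      using an unfolding analytic_op_def .
    have "(\<lambda>n::nat. if n = 0 then (1::complex) else 0) = (\<lambda>_. 0)"
      using mem[unfolded eq] by simp
    then have "(if (0::nat) = 0 then (1::complex) else 0) = 0"
      by (rule fun_cong)
    then show False by simp
  qed
next
  assume cond: "\<alpha> 0 = 0 \<or> (\<exists>j\<in>{1..k}. \<alpha> j \<noteq> 0)"
  let ?T = "T_op k \<alpha>"
  have sub: "y = (\<lambda>_. 0)" if y: "y \<in> (\<Inter>m\<in>{1..}. (?T ^^ m) ` l2_seq)" for y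
  proof -
    have ym: "\<And>m. 1 \<le> m \<Longrightarrow> \<exists>x\<in>l2_seq. y = (?T ^^ m) x" using y by auto
    show ?thesis
    proof (cases "\<alpha> 0 = 0")
      case True
      show ?thesis
      proof
        fix n
        obtain x where "y = (?T ^^ Suc n) x" using ym[of "Suc n"] by auto
        then show "y n = 0" using case0[of \<alpha> "Suc n" n k x] True assms(1) by simp
      qed
    next
      case a0: False
      then obtain i where i: "1 \<le> i" "i \<le> k" "\<alpha> i \<noteq> 0" using cond by auto
      have rec: "\<alpha> 0 * y n = y (n - k)" if kn: "k < n" for n
      proof -
        obtain x where "y = (?T ^^ n) x" using ym[of n] kn assms(1) by auto
        moreover have "n \<le> n * k" using assms(1) by simp
        ultimately show ?thesis using Q_lemma[OF assms(1) kn, of n \<alpha> x] by simp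
      qed
      have rec2: "\<alpha> 0 * y n = \<alpha> n * y 0" if nn: "1 \<le> n" "n \<le> k" for n
      proof -
        obtain x where "y = (?T ^^ 1) x" using ym[of 1] by auto
        then show ?thesis using R_lemma[of 1 n k \<alpha> x] nn by simp
      qed
      obtain x where x: "x \<in> l2_seq" "y = ?T x" using ym[of 1] by auto
      have ytail: "y n = x (n - k)" if "k < n" for n using x(2) that by (simp add: T_apply)
      have a0le: "cmod (\<alpha> 0) \<le> 1"
      proof -
        have "(cmod (\<alpha> 0))\<^sup>2 \<le> (\<Sum>i\<le>k. (cmod (\<alpha> i))\<^sup>2)"
          by (rule member_le_sum) auto
        then have "(cmod (\<alpha> 0))\<^sup>2 \<le> 1" using assms(2) by simp
        then show ?thesis by (simp add: power_le_one_iff abs_le_square_iff)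
      qed
      have y0: "y 0 = 0"
      proof (rule ccontr)
        assume y0: "y 0 \<noteq> 0"
        have yi: "y i \<noteq> 0" using rec2[OF i(1,2)] i(3) y0 a0 by auto
        have pow: "\<alpha> 0 ^ m * y (i + m * k) = y i" for m
        proof (induction m)
          case 0 then show ?case by simp
        next
          case (Suc m)
          have e: "\<alpha> 0 * y (i + Suc m * k) = y (i + m * k)"
            using rec[of "i + Suc m * k"] i(1) by simp
          have "\<alpha> 0 ^ Suc m * y (i + Suc m * k) = \<alpha> 0 ^ m * (\<alpha> 0 * y (i + Suc m * k))"
            by (simp only: power_Suc2 mult.assoc)
          also have "\<dots> = \<alpha> 0 ^ m * y (i + m * k)" by (simp only: e)
          also have "\<dots> = y i" by (rule Suc.IH)
          finally show ?case .
        qed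
        have big: "cmod (y i) \<le> cmod (y (i + m * k))" for m
        proof -
          have "cmod (y i) = cmod (\<alpha> 0 ^ m * y (i + m * k))"
            using pow[of m] by simp
          also have "\<dots> = cmod (\<alpha> 0) ^ m * cmod (y (i + m * k))"
            by (simp add: norm_mult norm_power)
          also have "\<dots> \<le> cmod (y (i + m * k))"
            using a0le by (simp add: mult_left_le_one_le power_le_one)
          finally show ?thesis .
        qed
        have "(\<lambda>n. (cmod (x n))\<^sup>2) \<longlonglongrightarrow> 0"
          by (rule summable_LIMSEQ_zero) (use x(1) in \<open>simp add: l2_seq_def\<close>)
        moreover have "(cmod (y i))\<^sup>2 > 0" using yi by simp
        ultimately have "eventually (\<lambda>n. (cmod (x n))\<^sup>2 < (cmod (y i))\<^sup>2) sequentially"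
          by (rule order_tendstoD(2))
        then obtain N where N: "\<And>n. n \<ge> N \<Longrightarrow> (cmod (x n))\<^sup>2 < (cmod (y i))\<^sup>2"
          unfolding eventually_sequentially by blast
        have ge: "i + N * k - k \<ge> N"
        proof (cases N)
          case 0 then show ?thesis by simp
        next
          case (Suc M)
          then have "i + N * k - k = i + M * k" by simp
          moreover have "M * k \<ge> M" using assms(1) by simp
          ultimately show ?thesis using Suc i(1) by linarith
        qed
        show False
        proof (cases "N = 0")
          case True
          have "y (i + 1 * k) = x (i + 1 * k - k)" using ytail[of "i + 1*k"] i(1) by simp
          then have "cmod (y i) \<le> cmod (x i)" using big[of 1] by simp
          moreover have "(cmod (x i))\<^sup>2 < (cmod (y i))\<^sup>2" using N[of i] True by simp
          ultimately show False by (metis norm_ge_zero power_mono not_le)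
        next
          case False
          then have "k \<le> N * k" by simp
          then have kl: "k < i + N * k" using i(1) by linarith
          have "cmod (y i) \<le> cmod (x (i + N * k - k))" using big[of N] ytail[OF kl] by simp
          moreover have "(cmod (x (i + N * k - k)))\<^sup>2 < (cmod (y i))\<^sup>2" using N ge by simp
          ultimately show False by (metis norm_ge_zero power_mono not_le)
        qed
      qed
      show ?thesis
      proof
        fix n
        show "y n = 0"
        proof (induction n rule: less_induct)
          case (less n)
          show ?case
          proof (cases "n = 0")
            case True then show ?thesis using y0 by simp
          next
            case n0: False
            show ?thesis
            proof (cases "n \<le> k")
              case True
              then show ?thesis using rec2[of n] n0 y0 a0 by simp
            next
              case False
              then have "y (n - k) = 0" using less assms(1) by simp
              then show ?thesis using rec[of n] False a0 by simp
            qed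
          qed
        qed
      qed
    qed
  qed
  have "(\<lambda>_. 0) \<in> (\<Inter>m\<in>{1..}. (?T ^^ m) ` l2_seq)"
    using zero_l2 T_zero_pow by (metis (no_types, lifting) INT_I image_eqI)
  then show "analytic_op l2_seq ?T" unfolding analytic_op_def using sub by blast
qed

end
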